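(* Let $T:X\rightrightarrows X^*$ be a pseudomonotone operator. Then $T$ is $D$-maximal pseudomonotone if and only if $\widehat{T}=(\widehat{T})^\rho_D$, i.e. $\widehat T$ coincides with the restriction of $(\widehat T)^\rho$ to $\mathrm{dom}(\widehat T)=\mathrm{dom}(T)$.
   Context: $X$ is a real Banach space with dual $X^*$ and pairing $\langle x,x^*\rangle=x^*(x)$. A multivalued operator $T:X\rightrightarrows X^*$ is identified with its graph $T\subset X\times X^*$; $T(x)=\{x^*:(x,x^* )\in T\}$, $\mathrm{dom}(T)=\{x:T(x)\ne\emptyset\}$, $Z_T=\{x:0\in T(x)\}$. For $A\subset X^*$, $\operatorname{cone}(A)=\{tv:t\ge0,v\in A\}$ and $\operatorname{cone}_\circ(A)=\{tv:t>0,v\in A\}$. For $C\subset X$, $N_C(x)=\{x^*: \langle y-x,x^*\rangle\le0\ \forall y\in C\}$. For $(x,x^* ),(y,y^* )\in X\times X^*$, write $(x,x^* )\sim_p(y,y^* )$ if either $\min\{\langle x-y,y^*\rangle,\langle y-x,x^*\rangle\}<0$ or $\langle x-y,y^*\rangle=\langle y-x,x^*\rangle=0$. The pseudomonotone polar is $T^\rho=\{(x,x^* ): (x,x^* )\sim_p(y,y^* )\ \forall (y,y^* )\in T\}$, and $T^\rho_D$ denotes the restriction of $T^\rho$ to $\mathrm{dom}(T)$ (i.e. $T^\rho_D(x)=T^\rho(x)$ if $x\in\mathrm{dom}(T)$, $\emptyset$ otherwise). $T$ is pseudomonotone if for all $(x,x^* ),(y,y^* )\in T$, $\langle y-x,x^*\rangle\ge0$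 implies $\langle y-x,y^*\rangle\ge0$. Two operators $T,S$ are equivalent if $\mathrm{dom}(T)=\mathrm{dom}(S)$, $Z_T=Z_S$ and $\operatorname{cone}(T(x))=\operatorname{cone}(S(x))$ for all $x\in\mathrm{dom}(T)\setminus Z_T$. $T$ is $D$-maximal pseudomonotone if $T$ is pseudomonotone and there is a pseudomonotone operator $S$ equivalent to $T$ which has no proper pseudomonotone extension with the same domain. For pseudomonotone $T$ and $x\in Z_T$, let $L(T,x)=\{y\in X:\exists y^*\in T(y),\ \langle x-y,y^*\rangle\ge0\}$, and define $\widehat T(x)=N_{L(T,x)}(x)$ if $x\in Z_T$, $\widehat T(x)=\operatorname{cone}_\circ(T(x))$ if $x\in\mathrm{dom}(T)\setminus Z_T$, and $\widehat T(x)=\emptyset$ if $x\notin\mathrm{dom}(T)$. (It is known, due to Hadjisavvas, that $\widehat T$ is pseudomonotone, equivalent to $T$, and is the largest pseudomonotone operator equivalent to $T$.) *)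

theory Defs
  imports "HOL-Analysis.Analysis"
begin

text \<open>X is a real Banach space ('a::banach), its dual is the space of bounded (blinfun)
linear functionals; the pairing is blinfun_apply.
A multivalued operator is identified with its graph.\<close>

type_synonym 'a mop = "('a \<times> ('a \<Rightarrow>\<^sub>L real)) set"

definition opval :: "'a::real_normed_vector mop \<Rightarrow> 'a \<Rightarrow> ('a \<Rightarrow>\<^sub>L real) set" where
  "opval T x = {v. (x, v) \<in> T}"

definition opdom :: "'a::real_normed_vector mop \<Rightarrow> 'a set" where
  "opdom T = {x. opval T x \<noteq> {}}"

definition opzeros :: "'a::real_normed_vector mop \<Rightarrow> 'a set" where
  "opzeros T = {x. 0 \<in> opval T x}"

definition cone_of :: "('a::real_normed_vector \<Rightarrow>\<^sub>L real) set \<Rightarrow> ('a \<Rightarrow>\<^sub>L real) set" where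
  "cone_of A = {t *\<^sub>R v | t v. t \<ge> 0 \<and> v \<in> A}"

definition ocone_of :: "('a::real_normed_vector \<Rightarrow>\<^sub>L real) set \<Rightarrow> ('a \<Rightarrow>\<^sub>L real) set" where
  "ocone_of A = {t *\<^sub>R v | t v. t > 0 \<and> v \<in> A}"

definition normal_cone :: "'a::real_normed_vector set \<Rightarrow> 'a \<Rightarrow> ('a \<Rightarrow>\<^sub>L real) set" where
  "normal_cone C x = {v. \<forall>y\<in>C. blinfun_apply v (y - x) \<le> 0}"

definition sim_p :: "('a::real_normed_vector \<times> ('a \<Rightarrow>\<^sub>L real)) \<Rightarrow> ('a \<times> ('a \<Rightarrow>\<^sub>L real)) \<Rightarrow> bool" where
  "sim_p p q = (case p of (x, xs) \<Rightarrow> case q of (y, ys) \<Rightarrow>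
      min (blinfun_apply ys (x - y)) (blinfun_apply xs (y - x)) < 0
      \<or> (blinfun_apply ys (x - y) = 0 \<and> blinfun_apply xs (y - x) = 0))"

definition ps_polar :: "'a::real_normed_vector mop \<Rightarrow> 'a mop" where
  "ps_polar T = {p. \<forall>q\<in>T. sim_p p q}"

definition ps_polar_D :: "'a::real_normed_vector mop \<Rightarrow> 'a mop" where
  "ps_polar_D T = {(x, v). (x, v) \<in> ps_polar T \<and> x \<in> opdom T}"

definition pseudomonotone :: "'a::real_normed_vector mop \<Rightarrow> bool" where
  "pseudomonotone T \<longleftrightarrow> (\<forall>(x, xs)\<in>T. \<forall>(y, ys)\<in>T.
      blinfun_apply xs (y - x) \<ge> 0 \<longrightarrow> blinfun_apply ys (y - x) \<ge> 0)"

definition op_equivalent :: "'a::real_normed_vector mop \<Rightarrow> 'a mop \<Rightarrow> bool" where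
  "op_equivalent T S \<longleftrightarrow> opdom T = opdom S \<and> opzeros T = opzeros S \<and>
      (\<forall>x \<in> opdom T - opzeros T. cone_of (opval T x) = cone_of (opval S x))"

definition D_maximal_pseudomonotone :: "'a::real_normed_vector mop \<Rightarrow> bool" where
  "D_maximal_pseudomonotone T \<longleftrightarrow> pseudomonotone T \<and>
      (\<exists>S. pseudomonotone S \<and> op_equivalent T S \<and>
         \<not> (\<exists>S'. pseudomonotone S' \<and> S \<subset> S' \<and> opdom S' = opdom S))"

definition Lset :: "'a::real_normed_vector mop \<Rightarrow> 'a \<Rightarrow> 'a set" where
  "Lset T x = {y. \<exists>ys \<in> opval T y. blinfun_apply ys (x - y) \<ge> 0}"

definition hat :: "'a::real_normed_vector mop \<Rightarrow> 'a mop" where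
  "hat T = {(x, v). (x \<in> opzeros T \<and> v \<in> normal_cone (Lset T x) x)
      \<or> (x \<in> opdom T - opzeros T \<and> v \<in> ocone_of (opval T x))}"

end

theory Submission
  imports Defs
begin

lemma sim_p_sym: "sim_p p q = sim_p q p"
  by (cases p; cases q) (auto simp: sim_p_def min_def)

lemma sim_p_refl: "sim_p p p"
  by (cases p) (auto simp: sim_p_def)

lemma sim_p_pair: "sim_p (x, xs) (y, ys) \<longleftrightarrow>
   ((blinfun_apply xs (y - x) \<ge> 0 \<longrightarrow> blinfun_apply ys (y - x) \<ge> 0) \<and>
    (blinfun_apply ys (x - y) \<ge> 0 \<longrightarrow> blinfun_apply xs (x - y) \<ge> 0))"
  by (simp add: sim_p_def blinfun.diff_right min_def) linarith

lemma pm_iff: "pseudomonotone T \<longleftrightarrow> (\<forall>p\<in>T. \<forall>q\<in>T. sim_p p q)"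
proof
  assume H: "pseudomonotone T"
  show "\<forall>p\<in>T. \<forall>q\<in>T. sim_p p q"
  proof (intro ballI)
    fix p q assume p: "p \<in> T" and q: "q \<in> T"
    obtain x xs where px: "p = (x, xs)" by (cases p)
    obtain y ys where qy: "q = (y, ys)" by (cases q)
    have 1: "blinfun_apply xs (y - x) \<ge> 0 \<longrightarrow> blinfun_apply ys (y - x) \<ge> 0"
      using H p q px qy unfolding pseudomonotone_def by fastforce
    have 2: "blinfun_apply ys (x - y) \<ge> 0 \<longrightarrow> blinfun_apply xs (x - y) \<ge> 0"
      using H p q px qy unfolding pseudomonotone_def by fastforce
    show "sim_p p q" unfolding px qy sim_p_pair using 1 2 by simp
  qed
next
  assume H: "\<forall>p\<in>T. \<forall>q\<in>T. sim_p p q"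
  show "pseudomonotone T" unfolding pseudomonotone_def
  proof (intro ballI, clarify)
    fix x xs y ys assume "(x, xs) \<in> T" "(y, ys) \<in> T" "blinfun_apply xs (y - x) \<ge> 0"
    then show "blinfun_apply ys (y - x) \<ge> 0" using H sim_p_pair by blast
  qed
qed

lemma sim_p_scale:
  assumes "t > 0" shows "sim_p (x, t *\<^sub>R u) q = sim_p (x, u) q"
proof (cases q)
  case (Pair y w)
  have a: "(min a (t * b) < 0) = (min a b < 0)" for a b :: real
  proof -
    have "(t * b < 0) = (b < 0)" using assms by (simp add: mult_less_0_iff)
    then show ?thesis by (simp add: min_less_iff_disj)
  qed
  show ?thesis using assms a by (simp add: Pair sim_p_def scaleR_blinfun.rep_eq)
qed

lemma opval_hat_Z: "x \<in> opzeros T \<Longrightarrow> opval (hat T) x = normal_cone (Lset T x) x"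
  by (auto simp: opval_def hat_def opzeros_def opdom_def)

lemma opval_hat_D: "x \<in> opdom T - opzeros T \<Longrightarrow> opval (hat T) x = ocone_of (opval T x)"
  by (auto simp: opval_def hat_def opzeros_def opdom_def)

lemma opval_hat_N: "x \<notin> opdom T \<Longrightarrow> opval (hat T) x = {}"
  by (auto simp: opval_def hat_def opzeros_def opdom_def)

lemma zero_normal: "0 \<in> normal_cone C x"
  by (simp add: normal_cone_def)

lemma ocone_nonzero: "0 \<notin> A \<Longrightarrow> 0 \<notin> ocone_of A"
  by (auto simp: ocone_of_def)

lemma ocone_ne: "A \<noteq> {} \<Longrightarrow> ocone_of A \<noteq> {}"
  unfolding ocone_of_def by (auto intro!: exI[of _ 1])

lemma cone_ocone: "cone_of (ocone_of A) = cone_of A"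
proof
  show "cone_of (ocone_of A) \<subseteq> cone_of A"
    unfolding cone_of_def ocone_of_def
    by clarsimp (metis mult_nonneg_nonneg less_imp_le)
  show "cone_of A \<subseteq> cone_of (ocone_of A)"
    unfolding cone_of_def ocone_of_def
    by clarsimp (metis scaleR_one zero_less_one)
qed

lemma ocone_cone: "0 \<notin> A \<Longrightarrow> ocone_of A = cone_of A - {0}"
  unfolding cone_of_def ocone_of_def
  by auto (metis less_eq_real_def scaleR_eq_0_iff)+

lemma dom_hat: "opdom (hat T) = opdom T"
proof -
  have "x \<in> opdom (hat T) \<longleftrightarrow> x \<in> opdom T" for x
  proof (cases "x \<in> opzeros T")
    case True
    then show ?thesis using opval_hat_Z[OF True] zero_normal
      by (auto simp: opdom_def opzeros_def)
  next
    case False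
    show ?thesis
    proof (cases "x \<in> opdom T")
      case True
      then have "opval (hat T) x = ocone_of (opval T x)" using False opval_hat_D by blast
      moreover have "opval T x \<noteq> {}" using True by (simp add: opdom_def)
      ultimately show ?thesis using True ocone_ne by (simp add: opdom_def)
    next
      case F2: False
      then show ?thesis using opval_hat_N[OF F2] by (simp add: opdom_def)
    qed
  qed
  then show ?thesis by blast
qed

lemma zeros_hat: "opzeros (hat T) = opzeros T"
proof -
  have "x \<in> opzeros (hat T) \<longleftrightarrow> x \<in> opzeros T" for x
  proof (cases "x \<in> opzeros T")
    case True
    then show ?thesis using opval_hat_Z[OF True] zero_normal
      by (auto simp: opzeros_def)
  next
    case False
    then show ?thesis using opval_hat_D[of x T] opval_hat_N[of x T] ocone_nonzero[of "opval T x"]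
      by (cases "x \<in> opdom T") (auto simp: opzeros_def)
  qed
  then show ?thesis by blast
qed

lemma hat_equiv: "op_equivalent T (hat T)"
  unfolding op_equivalent_def
  using dom_hat zeros_hat opval_hat_D cone_ocone by metis

lemma equiv_sym: "op_equivalent T S \<Longrightarrow> op_equivalent S T"
  unfolding op_equivalent_def by auto

lemma Lset_sub:
  assumes e: "op_equivalent T S" shows "Lset T x \<subseteq> Lset S x"
proof
  fix y assume "y \<in> Lset T x"
  then obtain ys where ys: "ys \<in> opval T y" "blinfun_apply ys (x - y) \<ge> 0"
    by (auto simp: Lset_def)
  show "y \<in> Lset S x"
  proof (cases "y \<in> opzeros T")
    case True
    then have "0 \<in> opval S y" using e by (auto simp: op_equivalent_def opzeros_def)
    then show ?thesis by (auto simp: Lset_def intro!: bexI[of _ 0])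
  next
    case False
    then have yd: "y \<in> opdom T - opzeros T" using ys by (auto simp: opdom_def)
    have "ys \<in> cone_of (opval T y)" using ys(1) unfolding cone_of_def
      by (auto intro!: exI[of _ 1])
    then have "ys \<in> cone_of (opval S y)" using e yd
      unfolding op_equivalent_def by blast
    then obtain t v where tv: "ys = t *\<^sub>R v" "t \<ge> 0" "v \<in> opval S y"
      by (auto simp: cone_of_def)
    have "t \<noteq> 0" using tv False ys(1) by (auto simp: opzeros_def)
    then have "t > 0" using tv by auto
    then have "blinfun_apply v (x - y) \<ge> 0" using ys(2) tv(1)
      by (simp add: zero_le_mult_iff scaleR_blinfun.rep_eq)
    then show ?thesis using tv by (auto simp: Lset_def)
  qed
qed

lemma hat_eq:
  assumes e: "op_equivalent T S" shows "hat T = hat S"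
proof -
  have L: "Lset T x = Lset S x" for x
    using Lset_sub[OF e] Lset_sub[OF equiv_sym[OF e]] by blast
  have oc: "ocone_of (opval T x) = ocone_of (opval S x)" if "x \<in> opdom T - opzeros T" for x
  proof -
    have "x \<in> opdom S - opzeros S" using e that by (auto simp: op_equivalent_def)
    then have "0 \<notin> opval S x" by (auto simp: opzeros_def)
    moreover have "0 \<notin> opval T x" using that by (auto simp: opzeros_def)
    ultimately show ?thesis using e that by (simp add: ocone_cone op_equivalent_def)
  qed
  have d: "opdom T = opdom S" "opzeros T = opzeros S" using e by (auto simp: op_equivalent_def)
  show ?thesis unfolding hat_def using L oc d by auto
qed

lemma sub_hat:
  assumes pm: "pseudomonotone S" shows "S \<subseteq> hat S"
proof (rule subsetI)
  fix p assume p: "p \<in> S"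
  obtain x v where xv: "p = (x, v)" by (cases p)
  show "p \<in> hat S"
  proof (cases "x \<in> opzeros S")
    case True
    have "v \<in> normal_cone (Lset S x) x"
      unfolding normal_cone_def mem_Collect_eq
    proof (rule ballI)
      fix y assume "y \<in> Lset S x"
      then obtain ys where "(y, ys) \<in> S" "blinfun_apply ys (x - y) \<ge> 0"
        by (auto simp: Lset_def opval_def)
      then have "blinfun_apply v (x - y) \<ge> 0"
        using pm p xv unfolding pseudomonotone_def by fastforce
      then show "blinfun_apply v (y - x) \<le> 0"
        by (metis blinfun.minus_right minus_diff_eq neg_0_le_iff_le)
    qed
    then show ?thesis using True xv by (auto simp: hat_def)
  next
    case False
    have "v \<in> ocone_of (opval S x)" using p xv unfolding ocone_of_def opval_def
      by (auto intro!: exI[of _ 1])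
    moreover have "x \<in> opdom S" using p xv by (auto simp: opdom_def opval_def)
    ultimately show ?thesis using False xv by (auto simp: hat_def)
  qed
qed

lemma hat_polar:
  assumes pm: "pseudomonotone S" and p: "p \<in> hat S" and q: "q \<in> S"
  shows "sim_p p q"
proof -
  obtain x v where xv: "p = (x, v)" by (cases p)
  obtain y w where yw: "q = (y, w)" by (cases q)
  show ?thesis
  proof (cases "x \<in> opzeros S")
    case True
    have v: "v \<in> normal_cone (Lset S x) x" using p xv True opval_hat_Z[OF True]
      by (auto simp: opval_def)
    have x0: "(x, 0) \<in> S" using True by (auto simp: opzeros_def opval_def)
    have a: "blinfun_apply w (x - y) \<le> 0"
    proof -
      have "blinfun_apply w (y - x) \<ge> 0" using pm x0 q yw unfolding pseudomonotone_def by fastforce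
      then show ?thesis by (metis blinfun.minus_right minus_diff_eq neg_0_le_iff_le)
    qed
    have b: "blinfun_apply w (x - y) \<ge> 0 \<Longrightarrow> blinfun_apply v (y - x) \<le> 0"
      using v q yw by (auto simp: normal_cone_def Lset_def opval_def)
    show ?thesis using a b unfolding xv yw sim_p_def by (auto simp: min_def)
  next
    case False
    then have "x \<in> opdom S" using p xv dom_hat[of S] by (auto simp: opdom_def opval_def)
    then have "v \<in> ocone_of (opval S x)" using p xv False opval_hat_D[of x S]
      by (auto simp: opval_def)
    then obtain t u where tu: "v = t *\<^sub>R u" "t > 0" "(x, u) \<in> S"
      by (auto simp: ocone_of_def opval_def)
    have "sim_p (x, u) q" using pm tu(3) q by (auto simp: pm_iff)
    then show ?thesis unfolding xv tu(1) sim_p_scale[OF tu(2)] .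
  qed
qed

theorem mainTheorem13:
  fixes T :: "('a::banach \<times> ('a \<Rightarrow>\<^sub>L real)) set"
  assumes "pseudomonotone T"
  shows "D_maximal_pseudomonotone T \<longleftrightarrow> hat T = ps_polar_D (hat T)"
proof
  assume "D_maximal_pseudomonotone T"
  then obtain S where S: "pseudomonotone S" "op_equivalent T S"
    and mx: "\<not> (\<exists>S'. pseudomonotone S' \<and> S \<subset> S' \<and> opdom S' = opdom S)"
    by (auto simp: D_maximal_pseudomonotone_def)
  have PS: "ps_polar_D S \<subseteq> S"
  proof (rule subsetI)
    fix p assume p: "p \<in> ps_polar_D S"
    obtain x v where xv: "p = (x, v)" by (cases p)
    have pol: "\<forall>q\<in>S. sim_p p q" and xd: "x \<in> opdom S"
      using p xv by (auto simp: ps_polar_D_def ps_polar_def)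
    have "pseudomonotone (insert p S)" using S(1) pol
      by (auto simp: pm_iff sim_p_refl) (metis sim_p_sym)
    moreover have "opdom (insert p S) = opdom S" using xd xv
      by (auto simp: opdom_def opval_def)
    ultimately show "p \<in> S" using mx by blast
  qed
  have SP: "S \<subseteq> ps_polar_D S" using S(1)
    by (auto simp: ps_polar_D_def ps_polar_def pm_iff opdom_def opval_def)
  have "hat S \<subseteq> ps_polar_D S"
  proof (rule subsetI)
    fix p assume p: "p \<in> hat S"
    obtain x v where xv: "p = (x, v)" by (cases p)
    have "x \<in> opdom S" using p xv dom_hat[of S] by (auto simp: opdom_def opval_def)
    then show "p \<in> ps_polar_D S" using hat_polar[OF S(1) p] xv
      by (auto simp: ps_polar_D_def ps_polar_def)
  qed
  then have "hat S = S" using sub_hat[OF S(1)] PS by blast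
  moreover have "hat T = hat S" using hat_eq[OF S(2)] .
  ultimately show "hat T = ps_polar_D (hat T)" using PS SP by auto
next
  assume eq: "hat T = ps_polar_D (hat T)"
  have pmh: "pseudomonotone (hat T)"
  proof -
    have "hat T \<subseteq> ps_polar (hat T)" using eq by (auto simp: ps_polar_D_def)
    then show ?thesis by (auto simp: pm_iff ps_polar_def)
  qed
  have "\<not> (\<exists>S'. pseudomonotone S' \<and> hat T \<subset> S' \<and> opdom S' = opdom (hat T))"
  proof
    assume "\<exists>S'. pseudomonotone S' \<and> hat T \<subset> S' \<and> opdom S' = opdom (hat T)"
    then obtain S' where S': "pseudomonotone S'" "hat T \<subset> S'" "opdom S' = opdom (hat T)" by blast
    have "S' \<subseteq> hat T"
    proof (rule subsetI)
      fix p assume p: "p \<in> S'"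
      obtain x v where xv: "p = (x, v)" by (cases p)
      have "x \<in> opdom (hat T)" using p xv S'(3) by (auto simp: opdom_def opval_def)
      moreover have "\<forall>q\<in>hat T. sim_p p q" using S'(1,2) p by (auto simp: pm_iff)
      ultimately have "p \<in> ps_polar_D (hat T)" using xv by (auto simp: ps_polar_D_def ps_polar_def)
      then show "p \<in> hat T" using eq by simp
    qed
    then show False using S'(2) by blast
  qed
  then show "D_maximal_pseudomonotone T"
    using assms pmh hat_equiv[of T] by (auto simp: D_maximal_pseudomonotone_def)
qed

end
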